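(* The conditional logics $\mathsf{CEC}$ and $\mathsf{CECN}$ do not have Craig interpolation; consequently they have neither UIP nor ULIP.
   Context: Formulas of $\mathcal{L}_\triangleright$: atoms, $\bot$, $\wedge,\vee,\to$, binary $\triangleright$; $\top:=\bot\to\bot$; $V(\phi)$ is the set of atoms occurring in $\phi$. $\mathsf{CE}$ is the smallest set of formulas containing all instances of classical tautologies and closed under modus ponens and the rule: from $\phi_0\leftrightarrow\phi_1$ and $\psi_0\leftrightarrow\psi_1$ infer $(\phi_0\triangleright\psi_0)\to(\phi_1\triangleright\psi_1)$. $\mathsf{CEC}=\mathsf{CE}$ plus all instances of (CC) $(\phi\triangleright\psi)\wedge(\phi\triangleright\theta)\to(\phi\triangleright\psi\wedge\theta)$; $\mathsf{CECN}=\mathsf{CEC}$ plus (CN) $\phi\triangleright\top$. CIP for a logic $L$: whenever $L\vdash\phi\to\psi$ there is $\theta$ with $V(\theta)\subseteq V(\phi)\cap V(\psi)$, $L\vdash\phi\to\theta$ and $L\vdash\theta\to\psi$. (UIP and ULIP are the uniform and uniform Lyndon interpolation properties, both of which imply CIP.) *)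

theory Defs
  imports Main
begin

datatype fm =
    Atom nat
  | Bot
  | And fm fm
  | Or fm fm
  | Imp fm fm
  | Cond fm fm

definition Top :: fm where "Top = Imp Bot Bot"

definition Iff :: "fm \<Rightarrow> fm \<Rightarrow> fm" where
  "Iff a b = And (Imp a b) (Imp b a)"

fun V :: "fm \<Rightarrow> nat set" where
  "V (Atom p) = {p}"
| "V Bot = {}"
| "V (And a b) = V a \<union> V b"
| "V (Or a b) = V a \<union> V b"
| "V (Imp a b) = V a \<union> V b"
| "V (Cond a b) = V a \<union> V b"

text \<open>Positive / negative atom occurrences (polarity); both arguments of the
  non-monotone operator are counted with both polarities.\<close>
fun Vpos :: "fm \<Rightarrow> nat set" and Vneg :: "fm \<Rightarrow> nat set" where
  "Vpos (Atom p) = {p}"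
| "Vpos Bot = {}"
| "Vpos (And a b) = Vpos a \<union> Vpos b"
| "Vpos (Or a b) = Vpos a \<union> Vpos b"
| "Vpos (Imp a b) = Vneg a \<union> Vpos b"
| "Vpos (Cond a b) = V a \<union> V b"
| "Vneg (Atom p) = {}"
| "Vneg Bot = {}"
| "Vneg (And a b) = Vneg a \<union> Vneg b"
| "Vneg (Or a b) = Vneg a \<union> Vneg b"
| "Vneg (Imp a b) = Vpos a \<union> Vneg b"
| "Vneg (Cond a b) = V a \<union> V b"

text \<open>A formula is an instance of a classical tautology iff it is true under
  every Boolean valuation that treats atoms and conditional formulas as
  propositional letters.\<close>
fun peval :: "(fm \<Rightarrow> bool) \<Rightarrow> fm \<Rightarrow> bool" where
  "peval v (Atom p) = v (Atom p)"
| "peval v Bot = False"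
| "peval v (And a b) = (peval v a \<and> peval v b)"
| "peval v (Or a b) = (peval v a \<or> peval v b)"
| "peval v (Imp a b) = (peval v a \<longrightarrow> peval v b)"
| "peval v (Cond a b) = v (Cond a b)"

definition taut :: "fm \<Rightarrow> bool" where
  "taut a = (\<forall>v. peval v a)"

inductive deriv :: "fm set \<Rightarrow> fm \<Rightarrow> bool" for Ax :: "fm set" where
  tautI: "taut a \<Longrightarrow> deriv Ax a"
| axI: "a \<in> Ax \<Longrightarrow> deriv Ax a"
| mp: "deriv Ax (Imp a b) \<Longrightarrow> deriv Ax a \<Longrightarrow> deriv Ax b"
| re: "deriv Ax (Iff a0 a1) \<Longrightarrow> deriv Ax (Iff b0 b1) \<Longrightarrow>
       deriv Ax (Imp (Cond a0 b0) (Cond a1 b1))"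

definition CC_ax :: "fm set" where
  "CC_ax = {Imp (And (Cond a b) (Cond a c)) (Cond a (And b c)) | a b c. True}"

definition CN_ax :: "fm set" where
  "CN_ax = {Cond a Top | a. True}"

definition CE :: "fm \<Rightarrow> bool" where "CE = deriv {}"
definition CEC :: "fm \<Rightarrow> bool" where "CEC = deriv CC_ax"
definition CECN :: "fm \<Rightarrow> bool" where "CECN = deriv (CC_ax \<union> CN_ax)"

definition CIP :: "(fm \<Rightarrow> bool) \<Rightarrow> bool" where
  "CIP L = (\<forall>a b. L (Imp a b) \<longrightarrow>
     (\<exists>c. V c \<subseteq> V a \<inter> V b \<and> L (Imp a c) \<and> L (Imp c b)))"

definition UIP :: "(fm \<Rightarrow> bool) \<Rightarrow> bool" where
  "UIP L = (\<forall>a p. \<exists>e u.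
     V e \<subseteq> V a - {p} \<and> V u \<subseteq> V a - {p} \<and>
     L (Imp a e) \<and> L (Imp u a) \<and>
     (\<forall>b. p \<notin> V b \<longrightarrow> L (Imp a b) \<longrightarrow> L (Imp e b)) \<and>
     (\<forall>b. p \<notin> V b \<longrightarrow> L (Imp b a) \<longrightarrow> L (Imp b u)))"

definition Vpol :: "bool \<Rightarrow> fm \<Rightarrow> nat set" where
  "Vpol pol a = (if pol then Vpos a else Vneg a)"

definition ULIP :: "(fm \<Rightarrow> bool) \<Rightarrow> bool" where
  "ULIP L = (\<forall>a p pol. \<exists>e u.
     (\<forall>q. Vpol q e \<subseteq> Vpol q a \<and> Vpol q u \<subseteq> Vpol q a) \<and>
     p \<notin> Vpol pol e \<and> p \<notin> Vpol pol u \<and>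
     L (Imp a e) \<and> L (Imp u a) \<and>
     (\<forall>b. p \<notin> Vpol pol b \<longrightarrow> L (Imp a b) \<longrightarrow> L (Imp e b)) \<and>
     (\<forall>b. p \<notin> Vpol pol b \<longrightarrow> L (Imp b a) \<longrightarrow> L (Imp b u)))"

end

theory Submission
  imports Defs
begin

fun ts :: "(nat \<Rightarrow> nat set) \<Rightarrow> nat set set \<Rightarrow> fm \<Rightarrow> nat set" where
  "ts val N (Atom n) = val n"
| "ts val N Bot = {}"
| "ts val N (And a b) = ts val N a \<inter> ts val N b"
| "ts val N (Or a b) = ts val N a \<union> ts val N b"
| "ts val N (Imp a b) = - ts val N a \<union> ts val N b"
| "ts val N (Cond a b) = (if ts val N b \<in> N then UNIV else {})"

lemma peval_ts: "peval (\<lambda>f. w \<in> ts val N f) a = (w \<in> ts val N a)"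
  by (induction a) auto

lemma sound:
  assumes "deriv Ax a" "\<forall>x\<in>Ax. ts val N x = UNIV"
  shows "ts val N a = UNIV"
  using assms
proof (induction rule: deriv.induct)
  case (tautI a)
  then show ?case using peval_ts[of _ val N a] unfolding taut_def by auto
next
  case (axI a) then show ?case by auto
next
  case (mp a b) then show ?case by auto
next
  case (re a0 a1 b0 b1)
  then have "ts val N b0 = ts val N b1" by (auto simp: Iff_def)
  then show ?case by auto
qed

lemma V_pn: "V a = Vpos a \<union> Vneg a"
  by (induction a) auto

lemma trans_d: "deriv Ax (Imp a b) \<Longrightarrow> deriv Ax (Imp b c) \<Longrightarrow> deriv Ax (Imp a c)"
proof -
  assume h1: "deriv Ax (Imp a b)" and h2: "deriv Ax (Imp b c)"
  have "taut (Imp (Imp a b) (Imp (Imp b c) (Imp a c)))" by (simp add: taut_def)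
  then have "deriv Ax (Imp (Imp a b) (Imp (Imp b c) (Imp a c)))" by (rule deriv.tautI)
  then show ?thesis using h1 h2 by (meson deriv.mp)
qed

definition phi :: fm where "phi = Cond Bot (And (Atom 0) (Atom 1))"
definition Xf :: fm where "Xf = Cond Bot (And (Imp (Atom 1) Bot) (Atom 2))"
definition psi :: fm where "psi = Imp Xf (Cond Bot Bot)"

lemma derivable:
  assumes "CC_ax \<subseteq> Ax"
  shows "deriv Ax (Imp phi psi)"
proof -
  let ?Y = "And (And (Atom 0) (Atom 1)) (And (Imp (Atom 1) Bot) (Atom 2))"
  have cc: "deriv Ax (Imp (And phi Xf) (Cond Bot ?Y))"
    apply (rule deriv.axI) using assms unfolding CC_ax_def phi_def Xf_def by blast
  have i1: "deriv Ax (Iff Bot Bot)" by (rule deriv.tautI) (simp add: taut_def Iff_def)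
  have i2: "deriv Ax (Iff ?Y Bot)" by (rule deriv.tautI) (auto simp: taut_def Iff_def)
  have r: "deriv Ax (Imp (Cond Bot ?Y) (Cond Bot Bot))" using deriv.re[OF i1 i2] .
  have t: "taut (Imp (Imp (And phi Xf) (Cond Bot ?Y)) (Imp (Imp (Cond Bot ?Y) (Cond Bot Bot)) (Imp phi psi)))"
    by (auto simp: taut_def psi_def)
  show ?thesis using deriv.mp[OF deriv.mp[OF deriv.tautI[OF t] cc] r] .
qed

definition val1 :: "nat \<Rightarrow> nat set" where "val1 n = (if n = 0 then {0} else if n = 1 then {0,1} else {})"
definition val2 :: "nat \<Rightarrow> nat set" where "val2 n = (if n = 2 then {2} else if n = 1 then {0,1} else {})"
definition N1 :: "nat set set" where "N1 = {{0}, UNIV}"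
definition N2 :: "nat set set" where "N2 = {{2}, UNIV}"

definition Df :: "nat set \<Rightarrow> bool" where
  "Df X = ((0 \<in> X \<longleftrightarrow> 1 \<in> X) \<and> (\<forall>x\<ge>2. x \<in> X \<longleftrightarrow> 2 \<in> X))"

lemma same:
  "V c \<subseteq> {1} \<Longrightarrow> ts val1 N1 c = ts val2 N2 c \<and> Df (ts val1 N1 c)"
proof (induction c)
  case (Atom x) then show ?case by (auto simp: val1_def val2_def Df_def)
next
  case Bot then show ?case by (simp add: Df_def)
next
  case (And c1 c2) then show ?case by (simp add: Df_def) blast
next
  case (Or c1 c2) then show ?case by (simp add: Df_def) blast
next
  case (Imp c1 c2) then show ?case by (simp add: Df_def) blast
next
  case (Cond c1 c2)
  have "V c2 \<subseteq> {1}" using Cond.prems by simp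
  then have e: "ts val1 N1 c2 = ts val2 N2 c2" and d: "Df (ts val1 N1 c2)" using Cond.IH(2) by blast+
  have n0: "\<not> Df {0}" by (simp add: Df_def)
  have n2: "\<not> Df {2}" unfolding Df_def by (simp, rule exI[of _ 3], simp)
  have nU: "Df UNIV" by (simp add: Df_def)
  have x0: "ts val1 N1 c2 \<noteq> {0}"
  proof
    assume "ts val1 N1 c2 = {0}" with d have "Df {0}" by simp
    with n0 show False by simp
  qed
  have x2: "ts val1 N1 c2 \<noteq> {2}"
  proof
    assume "ts val1 N1 c2 = {2}" with d have "Df {2}" by simp
    with n2 show False by simp
  qed
  have "(ts val1 N1 c2 \<in> N1) = (ts val1 N1 c2 = UNIV)"
    using x0 by (simp add: N1_def)
  moreover have "(ts val2 N2 c2 \<in> N2) = (ts val1 N1 c2 = UNIV)"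
    using x2 by (simp add: N2_def e)
  ultimately have "(ts val1 N1 c2 \<in> N1) = (ts val2 N2 c2 \<in> N2)" by simp
  moreover have "Df {}" by (simp add: Df_def)
  ultimately show ?case using nU d e by (simp only: ts.simps) simp
qed

lemma m1: "\<forall>x\<in>CC_ax \<union> CN_ax. ts val1 N1 x = UNIV"
  by (auto simp: CC_ax_def CN_ax_def N1_def Top_def)

lemma m2: "\<forall>x\<in>CC_ax \<union> CN_ax. ts val2 N2 x = UNIV"
  by (auto simp: CC_ax_def CN_ax_def N2_def Top_def)

lemma noint:
  assumes "Ax \<subseteq> CC_ax \<union> CN_ax" "V c \<subseteq> {1}" "deriv Ax (Imp phi c)" "deriv Ax (Imp c psi)"
  shows False
proof -
  have s1: "\<forall>x\<in>Ax. ts val1 N1 x = UNIV" using m1 assms(1) by blast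
  have s2: "\<forall>x\<in>Ax. ts val2 N2 x = UNIV" using m2 assms(1) by blast
  have "ts val1 N1 (And (Atom 0) (Atom 1)) = {0}" by (auto simp: val1_def)
  then have "ts val1 N1 phi = UNIV" by (simp add: phi_def N1_def)
  with sound[OF assms(3) s1] have "ts val1 N1 c = UNIV" by auto
  with same[OF assms(2)] have "ts val2 N2 c = UNIV" by auto
  with sound[OF assms(4) s2] have "ts val2 N2 psi = UNIV" by auto
  moreover have "ts val2 N2 (And (Imp (Atom 1) Bot) (Atom 2)) = {2}" by (auto simp: val2_def)
  then have "ts val2 N2 Xf = UNIV" by (simp add: Xf_def N2_def)
  moreover have "ts val2 N2 (Cond Bot Bot) = {}" by (simp add: N2_def)
  ultimately show False by (simp add: psi_def)
qed

lemma Vphi: "V phi = {0,1}" by (auto simp: phi_def)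
lemma Vpsi: "V psi = {1,2}" by (auto simp: psi_def Xf_def)

lemma notCIP:
  assumes "CC_ax \<subseteq> Ax" "Ax \<subseteq> CC_ax \<union> CN_ax"
  shows "\<not> CIP (deriv Ax)"
proof
  assume "CIP (deriv Ax)"
  then obtain c where "V c \<subseteq> V phi \<inter> V psi" "deriv Ax (Imp phi c)" "deriv Ax (Imp c psi)"
    using derivable[OF assms(1)] unfolding CIP_def by blast
  moreover have "V phi \<inter> V psi = {1}" by (auto simp: Vphi Vpsi)
  ultimately show False using noint[OF assms(2)] by auto
qed

lemma notUIP:
  assumes "CC_ax \<subseteq> Ax" "Ax \<subseteq> CC_ax \<union> CN_ax"
  shows "\<not> UIP (deriv Ax)"
proof
  assume "UIP (deriv Ax)"
  then obtain e where e: "V e \<subseteq> V phi - {0}" "deriv Ax (Imp phi e)"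
    "\<forall>b. 0 \<notin> V b \<longrightarrow> deriv Ax (Imp phi b) \<longrightarrow> deriv Ax (Imp e b)"
    unfolding UIP_def by blast
  have "deriv Ax (Imp e psi)" using e(3) derivable[OF assms(1)] Vpsi by auto
  moreover have "V e \<subseteq> {1}" using e(1) Vphi by auto
  ultimately show False using noint[OF assms(2)] e(2) by auto
qed

lemma notULIP:
  assumes "CC_ax \<subseteq> Ax" "Ax \<subseteq> CC_ax \<union> CN_ax"
  shows "\<not> ULIP (deriv Ax)"
proof
  assume u: "ULIP (deriv Ax)"
  have U: "\<And>a p pol. \<exists>e u.
     (\<forall>q. Vpol q e \<subseteq> Vpol q a \<and> Vpol q u \<subseteq> Vpol q a) \<and>
     p \<notin> Vpol pol e \<and> p \<notin> Vpol pol u \<and>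
     deriv Ax (Imp a e) \<and> deriv Ax (Imp u a) \<and>
     (\<forall>b. p \<notin> Vpol pol b \<longrightarrow> deriv Ax (Imp a b) \<longrightarrow> deriv Ax (Imp e b)) \<and>
     (\<forall>b. p \<notin> Vpol pol b \<longrightarrow> deriv Ax (Imp b a) \<longrightarrow> deriv Ax (Imp b u))"
    using u unfolding ULIP_def by blast
  obtain e u1 where E: "(\<forall>q. Vpol q e \<subseteq> Vpol q phi \<and> Vpol q u1 \<subseteq> Vpol q phi) \<and>
     0 \<notin> Vpol True e \<and> 0 \<notin> Vpol True u1 \<and>
     deriv Ax (Imp phi e) \<and> deriv Ax (Imp u1 phi) \<and>
     (\<forall>b. 0 \<notin> Vpol True b \<longrightarrow> deriv Ax (Imp phi b) \<longrightarrow> deriv Ax (Imp e b)) \<and>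
     (\<forall>b. 0 \<notin> Vpol True b \<longrightarrow> deriv Ax (Imp b phi) \<longrightarrow> deriv Ax (Imp b u1))"
    using U[of phi 0 True] by (elim exE)
  obtain e' u2 where E': "(\<forall>q. Vpol q e' \<subseteq> Vpol q e \<and> Vpol q u2 \<subseteq> Vpol q e) \<and>
     0 \<notin> Vpol False e' \<and> 0 \<notin> Vpol False u2 \<and>
     deriv Ax (Imp e e') \<and> deriv Ax (Imp u2 e) \<and>
     (\<forall>b. 0 \<notin> Vpol False b \<longrightarrow> deriv Ax (Imp e b) \<longrightarrow> deriv Ax (Imp e' b)) \<and>
     (\<forall>b. 0 \<notin> Vpol False b \<longrightarrow> deriv Ax (Imp b e) \<longrightarrow> deriv Ax (Imp b u2))"
    using U[of e 0 False] by (elim exE)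
  have vp: "0 \<notin> Vpol q psi" for q using Vpsi V_pn[of psi] by (auto simp: Vpol_def)
  have "deriv Ax (Imp e psi)" using E vp derivable[OF assms(1)] by blast
  then have d2: "deriv Ax (Imp e' psi)" using E' vp by blast
  have d1: "deriv Ax (Imp phi e')" using trans_d E E' by blast
  have p1: "Vpos e \<subseteq> Vpos phi" "Vneg e \<subseteq> Vneg phi" "0 \<notin> Vpos e"
  proof -
    have "\<forall>q. Vpol q e \<subseteq> Vpol q phi" using E by blast
    then have "Vpol True e \<subseteq> Vpol True phi" "Vpol False e \<subseteq> Vpol False phi" by blast+
    moreover have "0 \<notin> Vpol True e" using E by blast
    ultimately show "Vpos e \<subseteq> Vpos phi" "Vneg e \<subseteq> Vneg phi" "0 \<notin> Vpos e" by (simp_all add: Vpol_def)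
  qed
  have p2: "Vpos e' \<subseteq> Vpos e" "Vneg e' \<subseteq> Vneg e" "0 \<notin> Vneg e'"
  proof -
    have "\<forall>q. Vpol q e' \<subseteq> Vpol q e" using E' by blast
    then have "Vpol True e' \<subseteq> Vpol True e" "Vpol False e' \<subseteq> Vpol False e" by blast+
    moreover have "0 \<notin> Vpol False e'" using E' by blast
    ultimately show "Vpos e' \<subseteq> Vpos e" "Vneg e' \<subseteq> Vneg e" "0 \<notin> Vneg e'" by (simp_all add: Vpol_def)
  qed
  have "V e' \<subseteq> V phi" using p1 p2 V_pn[of e'] V_pn[of phi] by blast
  moreover have "0 \<notin> V e'" using p1 p2 V_pn[of e'] by blast
  ultimately have "V e' \<subseteq> {1}" using Vphi by auto
  then show False using noint[OF assms(2)] d1 d2 by auto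
qed

theorem mainTheorem12:
  shows "\<not> CIP CEC \<and> \<not> CIP CECN \<and> \<not> UIP CEC \<and> \<not> UIP CECN \<and>
         \<not> ULIP CEC \<and> \<not> ULIP CECN"
  unfolding CEC_def CECN_def
  using notCIP[of CC_ax] notCIP[of "CC_ax \<union> CN_ax"] notUIP[of CC_ax] notUIP[of "CC_ax \<union> CN_ax"]
    notULIP[of CC_ax] notULIP[of "CC_ax \<union> CN_ax"]
  by auto

end
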